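(* Let $\delta$ satisfy the Kalmanson conditions with respect to $\pi=(x_1,\dots,x_n)$, let $C_1,\dots,C_m$ be a partition of $X$ into consecutive intervals of $\pi$ in this order, and let $\mu$ be a block weighting. If $1\le i<j\le m$ with $i<j-3$, then there exists $k\in\{1,\dots,m\}$ (indices read cyclically, $C_{m+1}=C_1$) such that \[Q_\delta(C_i,C_j)-Q_\delta(C_k,C_{k+1})\ge0.\]
   Context: $X=\{1,\dots,n\}$. A dissimilarity map is $\delta:X\times X\to\mathbb{R}$ with $\delta(i,j)=\delta(j,i)\ge0$, $\delta(i,i)=0$. A circular ordering is a listing $\pi=(x_1,\dots,x_n)$ of $X$ regarded cyclically. $\delta$ satisfies the Kalmanson conditions with respect to $\pi$ if for all $1\le i<j<k<l\le n$: $\delta(x_i,x_j)+\delta(x_k,x_l)\le\delta(x_i,x_k)+\delta(x_j,x_l)$ and $\delta(x_i,x_l)+\delta(x_j,x_k)\le\delta(x_i,x_k)+\delta(x_j,x_l)$. The partition into consecutive intervals means $C_1=\{x_1,\dots,x_{a_1}\}$, $C_2=\{x_{a_1+1},\dots,x_{a_2}\},\dots,C_m=\{x_{a_{m-1}+1},\dots,x_n\}$. A block weighting is $\mu:X\to\mathbb{R}_{\ge0}$ with $\sum_{x\in C_r}\mu(x)=1$ for every $r$. Set $\delta(C_r,C_s)=\sum_{x\in C_r,y\in C_s}\mu(x)\mu(y)\delta(x,y)$ and $Q_\delta(C_r,C_s)=(m-2)\delta(C_r,C_s)-\sum_{t\ne r}\delta(C_r,C_t)-\sum_{t\ne s}\delta(C_s,C_t)$.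 *)

theory Defs
  imports Complex_Main
begin

text \<open>Ground set X = {1..n}. A dissimilarity map on X.\<close>
definition dissimilarity :: "nat \<Rightarrow> (nat \<Rightarrow> nat \<Rightarrow> real) \<Rightarrow> bool" where
  "dissimilarity n \<delta> \<longleftrightarrow>
     (\<forall>x\<in>{1..n}. \<forall>y\<in>{1..n}. \<delta> x y = \<delta> y x \<and> \<delta> x y \<ge> 0) \<and>
     (\<forall>x\<in>{1..n}. \<delta> x x = 0)"

text \<open>A circular ordering (x_1,...,x_n) of X is given by a bijection \<pi> of {1..n},
  with x_i = \<pi> i.\<close>
definition circular_ordering :: "nat \<Rightarrow> (nat \<Rightarrow> nat) \<Rightarrow> bool" where
  "circular_ordering n \<pi> \<longleftrightarrow> bij_betw \<pi> {1..n} {1..n}"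

definition kalmanson :: "nat \<Rightarrow> (nat \<Rightarrow> nat \<Rightarrow> real) \<Rightarrow> (nat \<Rightarrow> nat) \<Rightarrow> bool" where
  "kalmanson n \<delta> \<pi> \<longleftrightarrow>
     (\<forall>i j k l. 1 \<le> i \<and> i < j \<and> j < k \<and> k < l \<and> l \<le> n \<longrightarrow>
        \<delta> (\<pi> i) (\<pi> j) + \<delta> (\<pi> k) (\<pi> l) \<le> \<delta> (\<pi> i) (\<pi> k) + \<delta> (\<pi> j) (\<pi> l) \<and>
        \<delta> (\<pi> i) (\<pi> l) + \<delta> (\<pi> j) (\<pi> k) \<le> \<delta> (\<pi> i) (\<pi> k) + \<delta> (\<pi> j) (\<pi> l))"

text \<open>Partition of X into m consecutive nonempty intervals of \<pi>, given by breakpoints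
  0 = a 0 < a 1 < ... < a m = n; block r is C_r = {x_t | a (r-1) < t \<le> a r}.\<close>
definition interval_partition :: "nat \<Rightarrow> nat \<Rightarrow> (nat \<Rightarrow> nat) \<Rightarrow> bool" where
  "interval_partition n m a \<longleftrightarrow> 1 \<le> m \<and> a 0 = 0 \<and> a m = n \<and> (\<forall>r<m. a r < a (Suc r))"

definition block :: "(nat \<Rightarrow> nat) \<Rightarrow> (nat \<Rightarrow> nat) \<Rightarrow> nat \<Rightarrow> nat set" where
  "block \<pi> a r = \<pi> ` {a (r - 1)<..a r}"

definition block_weighting :: "nat \<Rightarrow> nat \<Rightarrow> (nat \<Rightarrow> nat) \<Rightarrow> (nat \<Rightarrow> nat) \<Rightarrow> (nat \<Rightarrow> real) \<Rightarrow> bool" where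
  "block_weighting n m \<pi> a \<mu> \<longleftrightarrow>
     (\<forall>x\<in>{1..n}. \<mu> x \<ge> 0) \<and> (\<forall>r\<in>{1..m}. (\<Sum>x\<in>block \<pi> a r. \<mu> x) = 1)"

definition block_dist ::
  "(nat \<Rightarrow> nat \<Rightarrow> real) \<Rightarrow> (nat \<Rightarrow> real) \<Rightarrow> (nat \<Rightarrow> nat) \<Rightarrow> (nat \<Rightarrow> nat) \<Rightarrow> nat \<Rightarrow> nat \<Rightarrow> real" where
  "block_dist \<delta> \<mu> \<pi> a r s = (\<Sum>x\<in>block \<pi> a r. \<Sum>y\<in>block \<pi> a s. \<mu> x * \<mu> y * \<delta> x y)"

definition Qd ::
  "(nat \<Rightarrow> nat \<Rightarrow> real) \<Rightarrow> (nat \<Rightarrow> real) \<Rightarrow> (nat \<Rightarrow> nat) \<Rightarrow> (nat \<Rightarrow> nat) \<Rightarrow> nat \<Rightarrow> nat \<Rightarrow> nat \<Rightarrow> real" where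
  "Qd \<delta> \<mu> \<pi> a m r s =
     (real m - 2) * block_dist \<delta> \<mu> \<pi> a r s
     - (\<Sum>t\<in>{1..m} - {r}. block_dist \<delta> \<mu> \<pi> a r t)
     - (\<Sum>t\<in>{1..m} - {s}. block_dist \<delta> \<mu> \<pi> a s t)"

definition cyc_succ :: "nat \<Rightarrow> nat \<Rightarrow> nat" where
  "cyc_succ m k = (if k = m then 1 else k + 1)"

end

theory Submission
  imports Defs
begin

definition kal_ok :: "(nat \<Rightarrow> nat \<Rightarrow> real) \<Rightarrow> nat \<Rightarrow> bool" where
  "kal_ok D m \<longleftrightarrow> (\<forall>p q r s. 1 \<le> p \<and> p < q \<and> q < r \<and> r < s \<and> s \<le> m \<longrightarrow>
      D p q + D r s \<le> D p r + D q s \<and> D p s + D q r \<le> D p r + D q s)"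

definition Qz :: "(nat \<Rightarrow> nat \<Rightarrow> real) \<Rightarrow> nat \<Rightarrow> nat \<Rightarrow> nat \<Rightarrow> real" where
  "Qz D m x y = (real m - 2) * D x y - (\<Sum>t\<in>{1..m}. D x t) - (\<Sum>t\<in>{1..m}. D y t)"

lemma kalD:
  assumes "kal_ok D m" "1 \<le> p" "p < q" "q < r" "r < s" "s \<le> m"
  shows "D p q + D r s \<le> D p r + D q s" "D p s + D q r \<le> D p r + D q s"
  using assms unfolding kal_ok_def by blast+

lemma e_nonneg:
  assumes sym: "\<And>x y. D x y = D y x" and kal: "kal_ok D m" and "1 \<le> i" "j \<le> m"
    "k \<in> {i..<j}" "l \<in> {i..<j}" "k \<noteq> l"
  shows "0 \<le> D k l + D (Suc k) (Suc l) - D k (Suc k) - D l (Suc l)"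
proof (cases "k < l")
  case True
  show ?thesis
  proof (cases "l = Suc k")
    case True then show ?thesis by simp
  next
    case False
    with \<open>k<l\<close> have "Suc k < l" by simp
    then have "D k (Suc k) + D l (Suc l) \<le> D k l + D (Suc k) (Suc l)"
      using kalD(1)[OF kal, of k "Suc k" l "Suc l"] assms by auto
    then show ?thesis by linarith
  qed
next
  case False
  with assms have "l < k" by simp
  show ?thesis
  proof (cases "k = Suc l")
    case True then show ?thesis using sym[of l "Suc l"] sym[of "Suc l" "Suc (Suc l)"] by simp
  next
    case False
    with \<open>l<k\<close> have "Suc l < k" by simp
    then have "D l (Suc l) + D k (Suc k) \<le> D l k + D (Suc l) (Suc k)"
      using kalD(1)[OF kal, of l "Suc l" k "Suc k"] assms by auto
    then show ?thesis using sym[of l k] sym[of "Suc l" "Suc k"] by linarith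
  qed
qed

lemma H_bound:
  assumes sym: "\<And>x y. D x y = D y x" and diag: "\<And>x. D x x = 0" and kal: "kal_ok D m"
    and "1 \<le> i" "i < j" "j \<le> m"
  shows "(real (j-i) - 1) * (\<Sum>k\<in>{i..<j}. D k (Suc k)) \<le> (\<Sum>t\<in>{Suc i..<j}. \<Sum>y\<in>{i..j}. D t y)"
proof -
  define E where "E = {i..<j}"
  define T where "T = {Suc i..<j}"
  define S1 where "S1 = (\<Sum>k\<in>{i..<j}. D k (Suc k))"
  define e where "e = (\<lambda>k l. D k l + D (Suc k) (Suc l) - D k (Suc k) - D l (Suc l))"
  have a: "(\<Sum>k\<in>E. e k k) \<le> (\<Sum>k\<in>E. \<Sum>l\<in>E. e k l)"
  proof (rule sum_mono)
    fix k assume k: "k \<in> E"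
    have "(\<Sum>l\<in>E. e k l) = e k k + (\<Sum>l\<in>E-{k}. e k l)"
      using k by (simp add: sum.remove E_def)
    moreover have "0 \<le> (\<Sum>l\<in>E-{k}. e k l)"
      by (rule sum_nonneg) (use e_nonneg[OF sym kal \<open>1\<le>i\<close> \<open>j\<le>m\<close>] k in \<open>auto simp: E_def e_def\<close>)
    ultimately show "e k k \<le> (\<Sum>l\<in>E. e k l)" by linarith
  qed
  have ekk: "(\<Sum>k\<in>E. e k k) = -2 * S1"
  proof -
    have "(\<Sum>k\<in>E. e k k) = (\<Sum>k\<in>E. -2 * D k (Suc k))"
      by (rule sum.cong) (simp_all add: e_def diag)
    then show ?thesis by (simp add: sum_distrib_left S1_def E_def)
  qed
  have cardE: "card E = j - i" by (simp add: E_def)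
  have b: "(\<Sum>k\<in>E. \<Sum>l\<in>E. e k l) = (\<Sum>k\<in>E. \<Sum>l\<in>E. D k l) + (\<Sum>k\<in>E. \<Sum>l\<in>E. D (Suc k) (Suc l))
      - 2 * real (j-i) * S1"
    using \<open>i<j\<close> by (simp add: e_def sum_subtractf sum.distrib cardE S1_def E_def sum_distrib_left[symmetric] of_nat_diff)
  have c: "(\<Sum>k\<in>E. \<Sum>l\<in>E. D (Suc k) (Suc l)) = (\<Sum>k\<in>{Suc i..<Suc j}. \<Sum>l\<in>{Suc i..<Suc j}. D k l)"
    by (simp only: E_def sum.shift_bounds_Suc_ivl)
  have E1: "E = insert i T" using \<open>i<j\<close> by (auto simp: E_def T_def)
  have E2: "{Suc i..<Suc j} = insert j T" using \<open>i<j\<close> by (auto simp: T_def)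
  have P: "{i..j} = insert i (insert j T)" using \<open>i<j\<close> by (auto simp: T_def)
  have nT: "i \<notin> T" "j \<notin> T" by (auto simp: T_def)
  have fT: "finite T" by (simp add: T_def)
  have s1: "(\<Sum>t\<in>T. D t i) = (\<Sum>t\<in>T. D i t)" by (rule sum.cong) (simp_all add: sym)
  have s2: "(\<Sum>t\<in>T. D t j) = (\<Sum>t\<in>T. D j t)" by (rule sum.cong) (simp_all add: sym)
  have "(\<Sum>k\<in>E. \<Sum>l\<in>E. D k l) = 2 * (\<Sum>t\<in>T. D i t) + (\<Sum>k\<in>T. \<Sum>l\<in>T. D k l)"
    unfolding E1 using nT fT s1 by (simp add: sum.distrib diag)
  moreover have "(\<Sum>k\<in>{Suc i..<Suc j}. \<Sum>l\<in>{Suc i..<Suc j}. D k l) = 2 * (\<Sum>t\<in>T. D j t) + (\<Sum>k\<in>T. \<Sum>l\<in>T. D k l)"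
    unfolding E2 using nT fT s2 by (simp add: sum.distrib diag)
  moreover have "(\<Sum>t\<in>{Suc i..<j}. \<Sum>y\<in>{i..j}. D t y) = (\<Sum>t\<in>T. D i t) + (\<Sum>t\<in>T. D j t) + (\<Sum>k\<in>T. \<Sum>l\<in>T. D k l)"
    unfolding P T_def[symmetric] using nT fT s1 s2 \<open>i<j\<close> by (simp add: sum.distrib)
  moreover have "real (j - i) \<ge> 1" using \<open>i<j\<close> by simp
  ultimately show ?thesis using a b c ekk unfolding S1_def[symmetric]
    by (simp add: algebra_simps)
qed

lemma G1_bound:
  assumes sym: "\<And>x y. D x y = D y x" and kal: "kal_ok D m"
    and "1 \<le> i" "i + 2 \<le> j" "j \<le> m"
  shows "0 \<le> (2 - real (j-i)) * D i j + (\<Sum>t\<in>{Suc i..<j}. D i t + D t j) - (\<Sum>k\<in>{i..<j}. D k (Suc k))"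
proof -
  obtain j1 where j: "j = Suc j1" using assms by (cases j) auto
  have ij1: "Suc i \<le> j1" using assms j by simp
  have s: "0 \<le> (\<Sum>k\<in>{Suc i..<j1}. D i (Suc k) + D k j - D i j - D k (Suc k))"
  proof (rule sum_nonneg)
    fix k assume k: "k \<in> {Suc i..<j1}"
    have "D i j + D k (Suc k) \<le> D i (Suc k) + D k j"
      using kalD(2)[OF kal, of i k "Suc k" j] k assms j by auto
    then show "0 \<le> D i (Suc k) + D k j - D i j - D k (Suc k)" by linarith
  qed
  have i1: "(\<Sum>k\<in>{Suc i..<j1}. D i (Suc k)) = (\<Sum>t\<in>{Suc (Suc i)..<j}. D i t)"
    unfolding j by (simp only: sum.shift_bounds_Suc_ivl)
  have i2: "(\<Sum>t\<in>{Suc i..<j}. D i t) = D i (Suc i) + (\<Sum>t\<in>{Suc (Suc i)..<j}. D i t)"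
    using assms by (subst sum.atLeast_Suc_lessThan) auto
  have i3: "(\<Sum>t\<in>{Suc i..<j}. D t j) = (\<Sum>t\<in>{Suc i..<j1}. D t j) + D j1 j"
    unfolding j using ij1 by (subst sum.atLeastLessThan_Suc) auto
  have i4: "(\<Sum>k\<in>{i..<j}. D k (Suc k)) = (\<Sum>k\<in>{i..<j1}. D k (Suc k)) + D j1 j"
    unfolding j using ij1 by (subst sum.atLeastLessThan_Suc) auto
  have i5: "(\<Sum>k\<in>{i..<j1}. D k (Suc k)) = D i (Suc i) + (\<Sum>k\<in>{Suc i..<j1}. D k (Suc k))"
    using ij1 by (subst sum.atLeast_Suc_lessThan) auto
  have cr: "real (j1 - Suc i) = real (j - i) - 2" using ij1 j by (simp add: of_nat_diff)
  have s': "(\<Sum>k\<in>{Suc i..<j1}. D i (Suc k) + D k j - D i j - D k (Suc k)) =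
     (\<Sum>k\<in>{Suc i..<j1}. D i (Suc k)) + (\<Sum>k\<in>{Suc i..<j1}. D k j) - (real (j - i) - 2) * D i j
      - (\<Sum>k\<in>{Suc i..<j1}. D k (Suc k))"
    by (simp add: sum_subtractf sum.distrib cr)
  show ?thesis using s s' i1 i2 i3 i4 i5 by (simp add: sum.distrib algebra_simps)
qed

lemma out_bound:
  assumes sym: "\<And>x y. D x y = D y x" and kal: "kal_ok D m"
    and "1 \<le> i" "i < j" "j \<le> m" "y \<in> {1..m}" "y \<notin> {i..j}" "t \<in> {Suc i..<j}"
  shows "D i t + D t j - 2 * D i j \<le> 2 * D t y - D i y - D j y"
proof (cases "j < y")
  case True
  then show ?thesis using kalD[OF kal, of i t j y] assms by auto
next
  case False
  then have "y < i" using assms by auto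
  then show ?thesis using kalD[OF kal, of y i t j] assms sym[of y i] sym[of y t] sym[of y j] by auto
qed

lemma core:
  assumes sym: "\<And>x y. D x y = D y x" and diag: "\<And>x. D x x = 0" and kal: "kal_ok D m"
    and "1 \<le> i" "i + 2 \<le> j" "j \<le> m" "2 * (j - i) \<le> m"
  shows "0 \<le> (\<Sum>k\<in>{i..<j}. Qz D m i j - Qz D m k (Suc k))"
proof -
  have ij: "i < j" using assms by simp
  define R where "R x = (\<Sum>t\<in>{1..m}. D x t)" for x
  define L where "L = real (j - i)"
  define T where "T = {Suc i..<j}"
  define M where "M = {1..m}"
  define P where "P = {i..j}"
  define S1 where "S1 = (\<Sum>k\<in>{i..<j}. D k (Suc k))"
  define A where "A = (\<Sum>t\<in>T. D i t)"
  define B where "B = (\<Sum>t\<in>T. D t j)"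
  define TP where "TP = (\<Sum>t\<in>T. \<Sum>y\<in>P. D t y)"
  define Psi where "Psi y = (\<Sum>t\<in>T. 2 * D t y - D i y - D j y)" for y
  define SO where "SO = (\<Sum>y\<in>M - P. Psi y)"
  define RT where "RT = (\<Sum>t\<in>T. R t)"
  define Z where "Z = A + B - 2 * (L - 1) * D i j"
  have fT: "finite T" by (simp add: T_def)
  have cardT: "real (card T) = L - 1" using ij by (simp add: T_def L_def of_nat_diff)
  have cardE: "real (card {i..<j}) = L" by (simp add: L_def)
  have Qz_eq: "Qz D m x y = (real m - 2) * D x y - R x - R y" for x y by (simp add: Qz_def R_def)
  have F1a: "(\<Sum>k\<in>{i..<j}. Qz D m i j - Qz D m k (Suc k)) = L * Qz D m i j - (\<Sum>k\<in>{i..<j}. Qz D m k (Suc k))"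
    by (simp add: sum_subtractf cardE L_def)
  have F1b: "(\<Sum>k\<in>{i..<j}. Qz D m k (Suc k)) = (real m - 2) * S1 - (\<Sum>k\<in>{i..<j}. R k) - (\<Sum>k\<in>{i..<j}. R (Suc k))"
    by (simp add: Qz_eq sum_subtractf sum_distrib_left S1_def)
  have F1c: "(\<Sum>k\<in>{i..<j}. R k) = R i + RT"
    using ij by (simp add: sum.atLeast_Suc_lessThan RT_def T_def)
  have F1d: "(\<Sum>k\<in>{i..<j}. R (Suc k)) = RT + R j"
  proof -
    have "(\<Sum>k\<in>{i..<j}. R (Suc k)) = (\<Sum>k\<in>{Suc i..<Suc j}. R k)"
      by (simp only: sum.shift_bounds_Suc_ivl)
    also have "\<dots> = RT + R j" using ij by (simp add: sum.atLeastLessThan_Suc RT_def T_def)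
    finally show ?thesis .
  qed
  have F2: "(\<Sum>y\<in>M. Psi y) = 2 * RT - (L - 1) * (R i + R j)"
  proof -
    have "(\<Sum>y\<in>M. Psi y) = (\<Sum>t\<in>T. \<Sum>y\<in>M. 2 * D t y - D i y - D j y)"
      unfolding Psi_def by (rule sum.swap)
    also have "\<dots> = (\<Sum>t\<in>T. 2 * R t - R i - R j)"
      by (simp add: sum_subtractf sum_distrib_left R_def M_def)
    also have "\<dots> = 2 * RT - (L - 1) * (R i + R j)"
      by (simp add: sum_subtractf sum_distrib_left[symmetric] RT_def cardT algebra_simps sum_distrib_right[symmetric])
    finally show ?thesis .
  qed
  have PM: "P \<subseteq> M" using assms by (auto simp: P_def M_def)
  have F3: "(\<Sum>y\<in>M. Psi y) = (\<Sum>y\<in>P. Psi y) + SO"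
    using sum.subset_diff[OF PM, of Psi] by (simp add: SO_def M_def)
  have Pins: "P = insert i (insert j T)" using ij by (auto simp: P_def T_def)
  have nT: "i \<notin> T" "j \<notin> T" "i \<noteq> j" using ij by (auto simp: T_def)
  have F4: "(\<Sum>y\<in>P. Psi y) = 2 * TP - (L - 1) * (2 * D i j + A + B)"
  proof -
    have "(\<Sum>y\<in>P. Psi y) = (\<Sum>y\<in>P. 2 * (\<Sum>t\<in>T. D t y) - (L - 1) * (D i y + D j y))"
      by (rule sum.cong) (simp_all add: Psi_def sum_subtractf sum_distrib_left cardT algebra_simps)
    also have "\<dots> = 2 * (\<Sum>y\<in>P. \<Sum>t\<in>T. D t y) - (L - 1) * ((\<Sum>y\<in>P. D i y) + (\<Sum>y\<in>P. D j y))"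
      by (simp add: sum_subtractf sum_distrib_left sum.distrib distrib_left)
    also have "(\<Sum>y\<in>P. \<Sum>t\<in>T. D t y) = TP" unfolding TP_def by (rule sum.swap)
    also have "(\<Sum>y\<in>P. D i y) = D i j + A" unfolding Pins A_def using nT fT by (simp add: diag)
    also have "(\<Sum>y\<in>P. D j y) = D i j + B"
    proof -
      have "(\<Sum>t\<in>T. D j t) = B" unfolding B_def by (rule sum.cong) (simp_all add: sym)
      then show ?thesis unfolding Pins using nT fT by (simp add: diag sym[of j i])
    qed
    finally show ?thesis by (simp add: algebra_simps)
  qed
  have F5: "real (card (M - P)) * Z \<le> SO"
  proof -
    have "(\<Sum>y\<in>M - P. Z) \<le> SO"
      unfolding SO_def
    proof (rule sum_mono)
      fix y assume y: "y \<in> M - P"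
      have "Z = (\<Sum>t\<in>T. D i t + D t j - 2 * D i j)"
        by (simp add: Z_def A_def B_def sum_subtractf sum.distrib cardT algebra_simps)
      also have "\<dots> \<le> Psi y" unfolding Psi_def
        by (rule sum_mono) (use out_bound[OF sym kal \<open>1\<le>i\<close> ij \<open>j\<le>m\<close>] y in \<open>auto simp: M_def P_def T_def\<close>)
      finally show "Z \<le> Psi y" .
    qed
    then show ?thesis by simp
  qed
  have cardMP: "real (card (M - P)) = real m - L - 1"
  proof -
    have "card (M - P) = card M - card P" using PM by (simp add: card_Diff_subset P_def)
    moreover have "card M = m" "card P = Suc j - i" by (simp_all add: M_def P_def)
    ultimately show ?thesis using assms ij by (simp add: L_def of_nat_diff)
  qed
  have H: "(L - 1) * S1 \<le> TP"
    using H_bound[OF sym diag kal \<open>1\<le>i\<close> ij \<open>j\<le>m\<close>] by (simp add: L_def S1_def TP_def T_def P_def)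
  have G1: "0 \<le> (2 - L) * D i j + A + B - S1"
  proof -
    have "(\<Sum>t\<in>{Suc i..<j}. D i t + D t j) = A + B" by (simp add: sum.distrib A_def B_def T_def)
    then show ?thesis using G1_bound[OF sym kal \<open>1\<le>i\<close> \<open>i+2\<le>j\<close> \<open>j\<le>m\<close>] by (simp add: L_def S1_def)
  qed
  have mL: "0 \<le> real m - 2 * L" using assms ij by (simp add: L_def of_nat_diff)
  have prod: "0 \<le> (real m - 2 * L) * ((2 - L) * D i j + A + B - S1)"
    using mL G1 by (rule mult_nonneg_nonneg)
  have Fexp: "(\<Sum>k\<in>{i..<j}. Qz D m i j - Qz D m k (Suc k)) =
      (real m - 2) * (L * D i j - S1) + 2 * TP - (L - 1) * (2 * D i j + A + B) + SO"
  proof -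
    have "2 * RT - (L - 1) * (R i + R j) = 2 * TP - (L - 1) * (2 * D i j + A + B) + SO"
      using F2 F3 F4 by simp
    then show ?thesis using F1a F1b F1c F1d by (simp add: Qz_eq algebra_simps)
  qed
  have key: "(real m - 2) * (L * D i j - S1) + 2 * TP - (L - 1) * (2 * D i j + A + B) + SO
     = 2 * (TP - (L - 1) * S1) + (real m - 2 * L) * ((2 - L) * D i j + A + B - S1) + (SO - (real m - L - 1) * Z)"
    by (simp add: Z_def algebra_simps)
  show ?thesis using Fexp key H prod F5 cardMP by (simp add: algebra_simps)
qed

lemma exists_from_sum:
  fixes f :: "nat \<Rightarrow> real"
  assumes "finite A" "A \<noteq> {}" "0 \<le> (\<Sum>k\<in>A. f k)"
  shows "\<exists>k\<in>A. 0 \<le> f k"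
proof (rule ccontr)
  assume "\<not> ?thesis"
  then have "\<forall>k\<in>A. 0 < - f k" by auto
  then have "0 < (\<Sum>k\<in>A. - f k)" using assms by (intro sum_pos) auto
  then show False using assms by (simp add: sum_negf)
qed

lemma Qz_sym:
  assumes sym: "\<And>x y. D x y = D y x"
  shows "Qz D m x y = Qz D m y x"
  by (simp add: Qz_def sym[of x y] algebra_simps)

lemma core_lin:
  assumes sym: "\<And>x y. D x y = D y x" and diag: "\<And>x. D x x = 0" and kal: "kal_ok D m"
    and "1 \<le> i" "i + 2 \<le> j" "j \<le> m" "2 * (j - i) \<le> m"
  shows "\<exists>k\<in>{i..<j}. 0 \<le> Qz D m i j - Qz D m k (Suc k)"
    using core[OF assms] assms by (intro exists_from_sum) auto

lemma core_exists:
  assumes sym: "\<And>x y. D x y = D y x" and diag: "\<And>x. D x x = 0" and kal: "kal_ok D m"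
    and "1 \<le> i" "i + 2 \<le> j" "j \<le> m" "2 * (j - i) \<le> m"
  shows "\<exists>k\<in>{1..m}. 0 \<le> Qz D m i j - Qz D m k (cyc_succ m k)"
proof -
  have "\<exists>k\<in>{i..<j}. 0 \<le> Qz D m i j - Qz D m k (Suc k)"
    using core_lin[OF assms] .
  then obtain k where k: "k \<in> {i..<j}" "0 \<le> Qz D m i j - Qz D m k (Suc k)" by blast
  then have "k \<in> {1..m}" "cyc_succ m k = Suc k" using assms by (auto simp: cyc_succ_def)
  then show ?thesis using k by metis
qed

definition rot :: "nat \<Rightarrow> nat \<Rightarrow> nat \<Rightarrow> nat" where
  "rot c j x = (if x \<le> c then x + j - 1 else x - c)"

lemma main_abstract:
  assumes sym: "\<And>x y. D x y = D y x" and diag: "\<And>x. D x x = 0" and kal: "kal_ok D m"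
    and "1 \<le> i" "i + 2 \<le> j" "j \<le> m"
  shows "\<exists>k\<in>{1..m}. 0 \<le> Qz D m i j - Qz D m k (cyc_succ m k)"
proof (cases "2 * (j - i) \<le> m")
  case True
  then show ?thesis using core_exists[OF assms] by blast
next
  case False
  show ?thesis
  proof (cases "i = 1 \<and> j = m")
    case True
    then have "Qz D m i j - Qz D m m (cyc_succ m m) = 0"
      using Qz_sym[of D m i j, OF sym] by (simp add: cyc_succ_def)
    moreover have "m \<in> {1..m}" using assms by auto
    ultimately show ?thesis by (metis order_refl)
  next
    case nt: False
    define c where "c = m - j + 1"
    define \<sigma> where "\<sigma> = rot c j"
    define D2 where "D2 x y = D (\<sigma> x) (\<sigma> y)" for x y
    have c1: "1 \<le> c" "c + j - 1 = m" using assms by (auto simp: c_def)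
    have sig_in: "\<sigma> x \<in> {1..m}" if "x \<in> {1..m}" for x
      using that assms c1 by (auto simp: \<sigma>_def rot_def)
    have inj: "inj_on \<sigma> {1..m}"
      unfolding inj_on_def \<sigma>_def rot_def using assms c1 by auto
    have img: "\<sigma> ` {1..m} = {1..m}"
      by (rule endo_inj_surj) (use sig_in inj in auto)
    have bij: "bij_betw \<sigma> {1..m} {1..m}" using inj img by (simp add: bij_betw_def)
    have sym2: "D2 x y = D2 y x" for x y by (simp add: D2_def sym)
    have diag2: "D2 x x = 0" for x by (simp add: D2_def diag)
    have kal2: "kal_ok D2 m"
      unfolding kal_ok_def
    proof (intro allI impI)
      fix p q r s assume h: "1 \<le> p \<and> p < q \<and> q < r \<and> r < s \<and> s \<le> m"
      show "D2 p q + D2 r s \<le> D2 p r + D2 q s \<and> D2 p s + D2 q r \<le> D2 p r + D2 q s"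
      proof (cases "s \<le> c")
        case True
        have o: "1 \<le> \<sigma> p" "\<sigma> p < \<sigma> q" "\<sigma> q < \<sigma> r" "\<sigma> r < \<sigma> s" "\<sigma> s \<le> m"
          using h c1 True assms by (auto simp: \<sigma>_def rot_def)
        show ?thesis using kalD[OF kal o] unfolding D2_def by linarith
      next
        case s: False
        show ?thesis
        proof (cases "r \<le> c")
          case True
          have o: "1 \<le> \<sigma> s" "\<sigma> s < \<sigma> p" "\<sigma> p < \<sigma> q" "\<sigma> q < \<sigma> r" "\<sigma> r \<le> m"
            using h c1 True s assms by (auto simp: \<sigma>_def rot_def)
          show ?thesis using kalD[OF kal o]
              sym[of "\<sigma> p" "\<sigma> s"] sym[of "\<sigma> q" "\<sigma> s"] sym[of "\<sigma> r" "\<sigma> s"]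
            unfolding D2_def by linarith
        next
          case r: False
          show ?thesis
          proof (cases "q \<le> c")
            case True
            have o: "1 \<le> \<sigma> r" "\<sigma> r < \<sigma> s" "\<sigma> s < \<sigma> p" "\<sigma> p < \<sigma> q" "\<sigma> q \<le> m"
              using h c1 True s r assms by (auto simp: \<sigma>_def rot_def)
            show ?thesis using kalD[OF kal o]
                sym[of "\<sigma> p" "\<sigma> r"] sym[of "\<sigma> q" "\<sigma> r"] sym[of "\<sigma> p" "\<sigma> s"] sym[of "\<sigma> q" "\<sigma> s"]
              unfolding D2_def by linarith
          next
            case q: False
            show ?thesis
            proof (cases "p \<le> c")
              case True
              have o: "1 \<le> \<sigma> q" "\<sigma> q < \<sigma> r" "\<sigma> r < \<sigma> s" "\<sigma> s < \<sigma> p" "\<sigma> p \<le> m"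
                using h c1 True s r q assms by (auto simp: \<sigma>_def rot_def)
              show ?thesis using kalD[OF kal o]
                  sym[of "\<sigma> p" "\<sigma> q"] sym[of "\<sigma> p" "\<sigma> r"] sym[of "\<sigma> p" "\<sigma> s"]
                unfolding D2_def by linarith
            next
              case False
              have o: "1 \<le> \<sigma> p" "\<sigma> p < \<sigma> q" "\<sigma> q < \<sigma> r" "\<sigma> r < \<sigma> s" "\<sigma> s \<le> m"
                using h c1 False s r q assms by (auto simp: \<sigma>_def rot_def)
              show ?thesis using kalD[OF kal o] unfolding D2_def by linarith
            qed
          qed
        qed
      qed
    qed
    have Qtr: "Qz D2 m x y = Qz D m (\<sigma> x) (\<sigma> y)" for x y
    proof -
      have "(\<Sum>t\<in>{1..m}. D (\<sigma> z) (\<sigma> t)) = (\<Sum>t\<in>{1..m}. D (\<sigma> z) t)" for z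
        using sum.reindex_bij_betw[OF bij, of "D (\<sigma> z)"] by simp
      then show ?thesis by (simp add: Qz_def D2_def)
    qed
    have j2: "1 + 2 \<le> c + i" "c + i \<le> m" "2 * (c + i - 1) \<le> m"
      using assms nt False by (auto simp: c_def)
    obtain k where k: "k \<in> {1..<c+i}" "0 \<le> Qz D2 m 1 (c + i) - Qz D2 m k (Suc k)"
      using core_lin[OF sym2 diag2 kal2 order_refl j2] by auto
    have s1: "\<sigma> 1 = j" "\<sigma> (c + i) = i" using c1 assms by (auto simp: \<sigma>_def rot_def)
    have sk: "\<sigma> k \<in> {1..m}" using sig_in k j2 by auto
    have sk2: "\<sigma> (Suc k) = cyc_succ m (\<sigma> k)"
    proof -
      consider "k < c" | "k = c" | "c < k" by linarith
      then show ?thesis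
      proof cases
        case 1 then show ?thesis using k j2 c1 assms by (simp add: \<sigma>_def rot_def cyc_succ_def)
      next
        case 2 then show ?thesis using k j2 c1 assms by (simp add: \<sigma>_def rot_def cyc_succ_def)
      next
        case 3
        then have "\<sigma> k = k - c" "\<sigma> (Suc k) = Suc k - c" "k - c \<noteq> m" "Suc k - c = k - c + 1"
          using k j2 c1 assms by (simp_all add: \<sigma>_def rot_def)
        then show ?thesis by (simp add: cyc_succ_def)
      qed
    qed
    have "0 \<le> Qz D m i j - Qz D m (\<sigma> k) (cyc_succ m (\<sigma> k))"
      using k(2) unfolding Qtr s1 sk2 using Qz_sym[of D m i j, OF sym] by simp
    then show ?thesis using sk by blast
  qed
qed


lemma proj_lemmas:
  fixes \<nu> :: "nat \<Rightarrow> real" and g :: "nat \<Rightarrow> nat \<Rightarrow> real"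
  assumes s1: "(\<Sum>x\<in>U1. \<nu> x) = 1" and s2: "(\<Sum>x\<in>U2. \<nu> x) = 1"
    and s3: "(\<Sum>x\<in>U3. \<nu> x) = 1" and s4: "(\<Sum>x\<in>U4. \<nu> x) = 1"
  shows "(\<Sum>a\<in>U1. \<Sum>b\<in>U2. \<Sum>c\<in>U3. \<Sum>e\<in>U4. \<nu> a * \<nu> b * \<nu> c * \<nu> e * g a b) = (\<Sum>a\<in>U1. \<Sum>b\<in>U2. \<nu> a * \<nu> b * g a b)"
    and "(\<Sum>a\<in>U1. \<Sum>b\<in>U2. \<Sum>c\<in>U3. \<Sum>e\<in>U4. \<nu> a * \<nu> b * \<nu> c * \<nu> e * g c e) = (\<Sum>c\<in>U3. \<Sum>e\<in>U4. \<nu> c * \<nu> e * g c e)"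
    and "(\<Sum>a\<in>U1. \<Sum>b\<in>U2. \<Sum>c\<in>U3. \<Sum>e\<in>U4. \<nu> a * \<nu> b * \<nu> c * \<nu> e * g a c) = (\<Sum>a\<in>U1. \<Sum>c\<in>U3. \<nu> a * \<nu> c * g a c)"
    and "(\<Sum>a\<in>U1. \<Sum>b\<in>U2. \<Sum>c\<in>U3. \<Sum>e\<in>U4. \<nu> a * \<nu> b * \<nu> c * \<nu> e * g b e) = (\<Sum>b\<in>U2. \<Sum>e\<in>U4. \<nu> b * \<nu> e * g b e)"
    and "(\<Sum>a\<in>U1. \<Sum>b\<in>U2. \<Sum>c\<in>U3. \<Sum>e\<in>U4. \<nu> a * \<nu> b * \<nu> c * \<nu> e * g a e) = (\<Sum>a\<in>U1. \<Sum>e\<in>U4. \<nu> a * \<nu> e * g a e)"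
    and "(\<Sum>a\<in>U1. \<Sum>b\<in>U2. \<Sum>c\<in>U3. \<Sum>e\<in>U4. \<nu> a * \<nu> b * \<nu> c * \<nu> e * g b c) = (\<Sum>b\<in>U2. \<Sum>c\<in>U3. \<nu> b * \<nu> c * g b c)"
proof -
  show "(\<Sum>a\<in>U1. \<Sum>b\<in>U2. \<Sum>c\<in>U3. \<Sum>e\<in>U4. \<nu> a * \<nu> b * \<nu> c * \<nu> e * g a b) = (\<Sum>a\<in>U1. \<Sum>b\<in>U2. \<nu> a * \<nu> b * g a b)"
  proof -
    have inn: "(\<Sum>c\<in>U3. \<Sum>e\<in>U4. \<nu> a * \<nu> b * \<nu> c * \<nu> e * g a b) = \<nu> a * \<nu> b * g a b * (\<Sum>c\<in>U3. \<nu> c) * (\<Sum>e\<in>U4. \<nu> e)" for a b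
      by (simp add: sum_distrib_left sum_distrib_right mult_ac)
    show ?thesis unfolding inn by (simp add: s1 s2 s3 s4 sum_distrib_left[symmetric] sum_distrib_right[symmetric] mult_ac)
  qed
  show "(\<Sum>a\<in>U1. \<Sum>b\<in>U2. \<Sum>c\<in>U3. \<Sum>e\<in>U4. \<nu> a * \<nu> b * \<nu> c * \<nu> e * g c e) = (\<Sum>c\<in>U3. \<Sum>e\<in>U4. \<nu> c * \<nu> e * g c e)"
  proof -
    have inn: "(\<Sum>c\<in>U3. \<Sum>e\<in>U4. \<nu> a * \<nu> b * \<nu> c * \<nu> e * g c e) = \<nu> a * \<nu> b * (\<Sum>c\<in>U3. \<Sum>e\<in>U4. \<nu> c * \<nu> e * g c e)" for a b
      by (simp add: sum_distrib_left sum_distrib_right mult_ac)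
    show ?thesis unfolding inn by (simp add: s1 s2 s3 s4 sum_distrib_left[symmetric] sum_distrib_right[symmetric] mult_ac)
  qed
  show "(\<Sum>a\<in>U1. \<Sum>b\<in>U2. \<Sum>c\<in>U3. \<Sum>e\<in>U4. \<nu> a * \<nu> b * \<nu> c * \<nu> e * g a c) = (\<Sum>a\<in>U1. \<Sum>c\<in>U3. \<nu> a * \<nu> c * g a c)"
  proof -
    have inn: "(\<Sum>c\<in>U3. \<Sum>e\<in>U4. \<nu> a * \<nu> b * \<nu> c * \<nu> e * g a c) = \<nu> b * (\<Sum>c\<in>U3. \<nu> a * \<nu> c * g a c) * (\<Sum>e\<in>U4. \<nu> e)" for a b
      by (simp add: sum_distrib_left sum_distrib_right mult_ac)
    show ?thesis unfolding inn by (simp add: s1 s2 s3 s4 sum_distrib_left[symmetric] sum_distrib_right[symmetric] mult_ac)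
  qed
  show "(\<Sum>a\<in>U1. \<Sum>b\<in>U2. \<Sum>c\<in>U3. \<Sum>e\<in>U4. \<nu> a * \<nu> b * \<nu> c * \<nu> e * g b e) = (\<Sum>b\<in>U2. \<Sum>e\<in>U4. \<nu> b * \<nu> e * g b e)"
  proof -
    have inn0: "(\<Sum>e\<in>U4. \<nu> a * \<nu> b * \<nu> c * \<nu> e * g b e) = \<nu> a * (\<nu> c * (\<Sum>e\<in>U4. \<nu> b * \<nu> e * g b e))" for a b c
      by (simp add: sum_distrib_left mult_ac)
    have inn: "(\<Sum>c\<in>U3. \<Sum>e\<in>U4. \<nu> a * \<nu> b * \<nu> c * \<nu> e * g b e) = \<nu> a * (\<Sum>c\<in>U3. \<nu> c * (\<Sum>e\<in>U4. \<nu> b * \<nu> e * g b e))" for a b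
      by (simp only: inn0 sum_distrib_left[symmetric])
    show ?thesis unfolding inn by (simp add: s1 s2 s3 s4 sum_distrib_left[symmetric] sum_distrib_right[symmetric] mult_ac)
  qed
  show "(\<Sum>a\<in>U1. \<Sum>b\<in>U2. \<Sum>c\<in>U3. \<Sum>e\<in>U4. \<nu> a * \<nu> b * \<nu> c * \<nu> e * g a e) = (\<Sum>a\<in>U1. \<Sum>e\<in>U4. \<nu> a * \<nu> e * g a e)"
  proof -
    have inn0: "(\<Sum>e\<in>U4. \<nu> a * \<nu> b * \<nu> c * \<nu> e * g a e) = \<nu> b * (\<nu> c * (\<Sum>e\<in>U4. \<nu> a * \<nu> e * g a e))" for a b c
      by (simp add: sum_distrib_left mult_ac)
    have inn: "(\<Sum>c\<in>U3. \<Sum>e\<in>U4. \<nu> a * \<nu> b * \<nu> c * \<nu> e * g a e) = \<nu> b * (\<Sum>c\<in>U3. \<nu> c * (\<Sum>e\<in>U4. \<nu> a * \<nu> e * g a e))" for a b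
      by (simp only: inn0 sum_distrib_left[symmetric])
    show ?thesis unfolding inn by (simp add: s1 s2 s3 s4 sum_distrib_left[symmetric] sum_distrib_right[symmetric] mult_ac)
  qed
  show "(\<Sum>a\<in>U1. \<Sum>b\<in>U2. \<Sum>c\<in>U3. \<Sum>e\<in>U4. \<nu> a * \<nu> b * \<nu> c * \<nu> e * g b c) = (\<Sum>b\<in>U2. \<Sum>c\<in>U3. \<nu> b * \<nu> c * g b c)"
  proof -
    have inn: "(\<Sum>c\<in>U3. \<Sum>e\<in>U4. \<nu> a * \<nu> b * \<nu> c * \<nu> e * g b c) = \<nu> a * (\<Sum>c\<in>U3. \<nu> b * \<nu> c * g b c) * (\<Sum>e\<in>U4. \<nu> e)" for a b
      by (simp add: sum_distrib_left sum_distrib_right mult_ac)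
    show ?thesis unfolding inn by (simp add: s1 s2 s3 s4 sum_distrib_left[symmetric] sum_distrib_right[symmetric] mult_ac)
  qed
qed

lemma quad_mono:
  fixes \<nu> :: "nat \<Rightarrow> real"
  assumes nn: "\<And>x. x \<in> U1 \<union> U2 \<union> U3 \<union> U4 \<Longrightarrow> 0 \<le> \<nu> x"
    and le: "\<And>a b c e. a \<in> U1 \<Longrightarrow> b \<in> U2 \<Longrightarrow> c \<in> U3 \<Longrightarrow> e \<in> U4 \<Longrightarrow> h a b c e \<le> h' a b c e"
  shows "(\<Sum>a\<in>U1. \<Sum>b\<in>U2. \<Sum>c\<in>U3. \<Sum>e\<in>U4. \<nu> a * \<nu> b * \<nu> c * \<nu> e * h a b c e)
       \<le> (\<Sum>a\<in>U1. \<Sum>b\<in>U2. \<Sum>c\<in>U3. \<Sum>e\<in>U4. \<nu> a * \<nu> b * \<nu> c * \<nu> e * h' a b c e)"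
proof (intro sum_mono)
  fix a b c e assume h: "a \<in> U1" "b \<in> U2" "c \<in> U3" "e \<in> U4"
  have "0 \<le> \<nu> a * \<nu> b * \<nu> c * \<nu> e" using nn h by simp
  then show "\<nu> a * \<nu> b * \<nu> c * \<nu> e * h a b c e \<le> \<nu> a * \<nu> b * \<nu> c * \<nu> e * h' a b c e"
    by (rule mult_left_mono[OF le[OF h]])
qed

lemma quad_kal:
  fixes \<nu> :: "nat \<Rightarrow> real" and g :: "nat \<Rightarrow> nat \<Rightarrow> real"
  assumes s1: "(\<Sum>x\<in>U1. \<nu> x) = 1" and s2: "(\<Sum>x\<in>U2. \<nu> x) = 1"
    and s3: "(\<Sum>x\<in>U3. \<nu> x) = 1" and s4: "(\<Sum>x\<in>U4. \<nu> x) = 1"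
    and nn: "\<And>x. x \<in> U1 \<union> U2 \<union> U3 \<union> U4 \<Longrightarrow> 0 \<le> \<nu> x"
    and k: "\<And>a b c e. a \<in> U1 \<Longrightarrow> b \<in> U2 \<Longrightarrow> c \<in> U3 \<Longrightarrow> e \<in> U4 \<Longrightarrow>
       g a b + g c e \<le> g a c + g b e \<and> g a e + g b c \<le> g a c + g b e"
  shows "(\<Sum>a\<in>U1. \<Sum>b\<in>U2. \<nu> a * \<nu> b * g a b) + (\<Sum>c\<in>U3. \<Sum>e\<in>U4. \<nu> c * \<nu> e * g c e)
      \<le> (\<Sum>a\<in>U1. \<Sum>c\<in>U3. \<nu> a * \<nu> c * g a c) + (\<Sum>b\<in>U2. \<Sum>e\<in>U4. \<nu> b * \<nu> e * g b e)"
    and "(\<Sum>a\<in>U1. \<Sum>e\<in>U4. \<nu> a * \<nu> e * g a e) + (\<Sum>b\<in>U2. \<Sum>c\<in>U3. \<nu> b * \<nu> c * g b c)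
      \<le> (\<Sum>a\<in>U1. \<Sum>c\<in>U3. \<nu> a * \<nu> c * g a c) + (\<Sum>b\<in>U2. \<Sum>e\<in>U4. \<nu> b * \<nu> e * g b e)"
proof -
  note P = proj_lemmas[OF s1 s2 s3 s4, of g]
  have m1: "(\<Sum>a\<in>U1. \<Sum>b\<in>U2. \<Sum>c\<in>U3. \<Sum>e\<in>U4. \<nu> a * \<nu> b * \<nu> c * \<nu> e * (g a b + g c e))
       \<le> (\<Sum>a\<in>U1. \<Sum>b\<in>U2. \<Sum>c\<in>U3. \<Sum>e\<in>U4. \<nu> a * \<nu> b * \<nu> c * \<nu> e * (g a c + g b e))"
    by (rule quad_mono[OF nn]) (use k in auto)
  have m2: "(\<Sum>a\<in>U1. \<Sum>b\<in>U2. \<Sum>c\<in>U3. \<Sum>e\<in>U4. \<nu> a * \<nu> b * \<nu> c * \<nu> e * (g a e + g b c))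
       \<le> (\<Sum>a\<in>U1. \<Sum>b\<in>U2. \<Sum>c\<in>U3. \<Sum>e\<in>U4. \<nu> a * \<nu> b * \<nu> c * \<nu> e * (g a c + g b e))"
    by (rule quad_mono[OF nn]) (use k in auto)
  show "(\<Sum>a\<in>U1. \<Sum>b\<in>U2. \<nu> a * \<nu> b * g a b) + (\<Sum>c\<in>U3. \<Sum>e\<in>U4. \<nu> c * \<nu> e * g c e)
      \<le> (\<Sum>a\<in>U1. \<Sum>c\<in>U3. \<nu> a * \<nu> c * g a c) + (\<Sum>b\<in>U2. \<Sum>e\<in>U4. \<nu> b * \<nu> e * g b e)"
    using m1 by (simp only: distrib_left sum.distrib P)
  show "(\<Sum>a\<in>U1. \<Sum>e\<in>U4. \<nu> a * \<nu> e * g a e) + (\<Sum>b\<in>U2. \<Sum>c\<in>U3. \<nu> b * \<nu> c * g b c)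
      \<le> (\<Sum>a\<in>U1. \<Sum>c\<in>U3. \<nu> a * \<nu> c * g a c) + (\<Sum>b\<in>U2. \<Sum>e\<in>U4. \<nu> b * \<nu> e * g b e)"
    using m2 by (simp only: distrib_left sum.distrib P)
qed


lemma a_mono:
  assumes "interval_partition n m a" "p < q" "q \<le> m"
  shows "a p < a q"
  using assms(2,3)
proof (induction q)
  case 0 then show ?case by simp
next
  case (Suc q)
  have step: "a q < a (Suc q)" using assms(1) Suc.prems by (simp add: interval_partition_def)
  show ?case
  proof (cases "p = q")
    case True then show ?thesis using step by simp
  next
    case False
    then have "a p < a q" using Suc by simp
    then show ?thesis using step by simp
  qed
qed

lemma a_mono_le:
  assumes "interval_partition n m a" "p \<le> q" "q \<le> m"
  shows "a p \<le> a q"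
  using a_mono[OF assms(1)] assms by (cases "p = q") (auto intro: less_imp_le)

lemma block_sub:
  assumes "interval_partition n m a" "1 \<le> r" "r \<le> m"
  shows "{a (r - 1)<..a r} \<subseteq> {1..n}"
proof -
  have "a r \<le> n" using a_mono_le[OF assms(1), of r m] assms by (simp add: interval_partition_def)
  then show ?thesis by auto
qed

lemma block_dist_reindex:
  assumes ip: "interval_partition n m a" and co: "circular_ordering n \<pi>"
    and "1 \<le> r" "r \<le> m" "1 \<le> s" "s \<le> m"
  shows "block_dist \<delta> \<mu> \<pi> a r s = (\<Sum>u\<in>{a (r - 1)<..a r}. \<Sum>v\<in>{a (s - 1)<..a s}.
            \<mu> (\<pi> u) * \<mu> (\<pi> v) * \<delta> (\<pi> u) (\<pi> v))"
proof -
  have inj: "inj_on \<pi> {1..n}" using co by (simp add: circular_ordering_def bij_betw_def)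
  have ir: "inj_on \<pi> {a (r - 1)<..a r}" using inj_on_subset[OF inj block_sub[OF ip]] assms by simp
  have is2: "inj_on \<pi> {a (s - 1)<..a s}" using inj_on_subset[OF inj block_sub[OF ip]] assms by simp
  show ?thesis unfolding block_dist_def block_def sum.reindex[OF ir] sum.reindex[OF is2] comp_def ..
qed

lemma weight_reindex:
  assumes ip: "interval_partition n m a" and co: "circular_ordering n \<pi>"
    and bw: "block_weighting n m \<pi> a \<mu>" and "1 \<le> r" "r \<le> m"
  shows "(\<Sum>u\<in>{a (r - 1)<..a r}. \<mu> (\<pi> u)) = 1"
proof -
  have inj: "inj_on \<pi> {1..n}" using co by (simp add: circular_ordering_def bij_betw_def)
  have ir: "inj_on \<pi> {a (r - 1)<..a r}" using inj_on_subset[OF inj block_sub[OF ip]] assms by simp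
  have "(\<Sum>x\<in>block \<pi> a r. \<mu> x) = 1" using bw assms by (simp add: block_weighting_def)
  then show ?thesis unfolding block_def using sum.reindex[OF ir, of \<mu>] by (simp add: comp_def)
qed

lemma block_kal:
  assumes ds: "dissimilarity n \<delta>" and co: "circular_ordering n \<pi>" and ka: "kalmanson n \<delta> \<pi>"
    and ip: "interval_partition n m a" and bw: "block_weighting n m \<pi> a \<mu>"
    and h: "1 \<le> p" "p < q" "q < r" "r < s" "s \<le> m"
  shows "block_dist \<delta> \<mu> \<pi> a p q + block_dist \<delta> \<mu> \<pi> a r s \<le> block_dist \<delta> \<mu> \<pi> a p r + block_dist \<delta> \<mu> \<pi> a q s
     \<and> block_dist \<delta> \<mu> \<pi> a p s + block_dist \<delta> \<mu> \<pi> a q r \<le> block_dist \<delta> \<mu> \<pi> a p r + block_dist \<delta> \<mu> \<pi> a q s"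
proof -
  define I where "I x = {a (x - 1)<..a x}" for x
  define \<nu> where "\<nu> u = \<mu> (\<pi> u)" for u
  define g where "g u v = \<delta> (\<pi> u) (\<pi> v)" for u v
  have BD: "block_dist \<delta> \<mu> \<pi> a x y = (\<Sum>u\<in>I x. \<Sum>v\<in>I y. \<nu> u * \<nu> v * g u v)"
    if "1 \<le> x" "x \<le> m" "1 \<le> y" "y \<le> m" for x y
    using block_dist_reindex[OF ip co that] by (simp add: I_def \<nu>_def g_def)
  have W: "(\<Sum>u\<in>I x. \<nu> u) = 1" if "1 \<le> x" "x \<le> m" for x
    using weight_reindex[OF ip co bw that] by (simp add: I_def \<nu>_def)
  have sub: "I x \<subseteq> {1..n}" if "1 \<le> x" "x \<le> m" for x
    using block_sub[OF ip that] by (simp add: I_def)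
  have nn: "0 \<le> \<nu> u" if "u \<in> I p \<union> I q \<union> I r \<union> I s" for u
  proof -
    have "u \<in> {1..n}" using that sub[of p] sub[of q] sub[of r] sub[of s] h by auto
    then have "\<pi> u \<in> {1..n}" using co by (auto simp: circular_ordering_def bij_betw_def)
    then show ?thesis using bw by (simp add: block_weighting_def \<nu>_def)
  qed
  have ord: "u < v" if "u \<in> I x" "v \<in> I y" "x < y" "y \<le> m" for u v x y
  proof -
    have "a x \<le> a (y - 1)" using a_mono_le[OF ip, of x "y - 1"] that by simp
    then show ?thesis using that by (auto simp: I_def)
  qed
  have kk: "g u v + g w z \<le> g u w + g v z \<and> g u z + g v w \<le> g u w + g v z"
    if "u \<in> I p" "v \<in> I q" "w \<in> I r" "z \<in> I s" for u v w z
  proof -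
    have "u < v" "v < w" "w < z" using ord that h by auto
    moreover have "1 \<le> u" "z \<le> n" using sub[of p] sub[of s] that h by auto
    ultimately show ?thesis using ka unfolding kalmanson_def g_def by blast
  qed
  note Q = quad_kal[OF W[of p] W[of q] W[of r] W[of s], of g]
  show ?thesis using Q h nn kk by (simp add: BD)
qed

lemma block_dist_sym:
  assumes ds: "dissimilarity n \<delta>" and co: "circular_ordering n \<pi>" and ip: "interval_partition n m a"
    and "1 \<le> r" "r \<le> m" "1 \<le> s" "s \<le> m"
  shows "block_dist \<delta> \<mu> \<pi> a r s = block_dist \<delta> \<mu> \<pi> a s r"
proof -
  have bs: "block \<pi> a x \<subseteq> {1..n}" if "1 \<le> x" "x \<le> m" for x
  proof -
    have "\<pi> ` {1..n} = {1..n}" using co by (simp add: circular_ordering_def bij_betw_def)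
    then show ?thesis using block_sub[OF ip that] unfolding block_def by blast
  qed
  have "block_dist \<delta> \<mu> \<pi> a r s = (\<Sum>y\<in>block \<pi> a s. \<Sum>x\<in>block \<pi> a r. \<mu> x * \<mu> y * \<delta> x y)"
    unfolding block_dist_def by (rule sum.swap)
  also have "\<dots> = block_dist \<delta> \<mu> \<pi> a s r"
    unfolding block_dist_def
  proof (intro sum.cong refl)
    fix y x assume "y \<in> block \<pi> a s" "x \<in> block \<pi> a r"
    then have "x \<in> {1..n}" "y \<in> {1..n}" using bs[of r] bs[of s] assms by auto
    then show "\<mu> x * \<mu> y * \<delta> x y = \<mu> y * \<mu> x * \<delta> y x" using ds by (simp add: dissimilarity_def)
  qed
  finally show ?thesis .
qed

theorem mainTheorem10:
  fixes n m :: nat and \<delta> :: "nat \<Rightarrow> nat \<Rightarrow> real" and \<pi> a :: "nat \<Rightarrow> nat"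
    and \<mu> :: "nat \<Rightarrow> real" and i j :: nat
  assumes "dissimilarity n \<delta>"
    and "circular_ordering n \<pi>"
    and "kalmanson n \<delta> \<pi>"
    and "interval_partition n m a"
    and "block_weighting n m \<pi> a \<mu>"
    and "1 \<le> i" and "i < j" and "j \<le> m" and "i + 3 < j"
  shows "\<exists>k\<in>{1..m}. Qd \<delta> \<mu> \<pi> a m i j - Qd \<delta> \<mu> \<pi> a m k (cyc_succ m k) \<ge> 0"
proof -
  note ds = assms(1) and co = assms(2) and ka = assms(3) and ip = assms(4) and bw = assms(5)
  define Db where "Db r s = (if r = s \<or> r \<notin> {1..m} \<or> s \<notin> {1..m} then 0 else block_dist \<delta> \<mu> \<pi> a r s)" for r s
  have sym: "Db x y = Db y x" for x y
    unfolding Db_def using block_dist_sym[OF ds co ip, of x y] by auto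
  have diag: "Db x x = 0" for x by (simp add: Db_def)
  have kal: "kal_ok Db m"
    unfolding kal_ok_def
  proof (intro allI impI)
    fix p q r s assume h: "1 \<le> p \<and> p < q \<and> q < r \<and> r < s \<and> s \<le> m"
    then show "Db p q + Db r s \<le> Db p r + Db q s \<and> Db p s + Db q r \<le> Db p r + Db q s"
      using block_kal[OF ds co ka ip bw, of p q r s] by (simp add: Db_def)
  qed
  have QQ: "Qd \<delta> \<mu> \<pi> a m x y = Qz Db m x y" if "x \<in> {1..m}" "y \<in> {1..m}" "x \<noteq> y" for x y
  proof -
    have S: "(\<Sum>t\<in>{1..m}. Db z t) = (\<Sum>t\<in>{1..m} - {z}. block_dist \<delta> \<mu> \<pi> a z t)" if "z \<in> {1..m}" for z
    proof -
      have "(\<Sum>t\<in>{1..m}. Db z t) = Db z z + (\<Sum>t\<in>{1..m} - {z}. Db z t)"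
        using that by (simp add: sum.remove)
      also have "(\<Sum>t\<in>{1..m} - {z}. Db z t) = (\<Sum>t\<in>{1..m} - {z}. block_dist \<delta> \<mu> \<pi> a z t)"
        by (rule sum.cong) (use that in \<open>auto simp: Db_def\<close>)
      finally show ?thesis by (simp add: diag)
    qed
    show ?thesis unfolding Qd_def Qz_def S[OF that(1)] S[OF that(2)] using that by (simp add: Db_def)
  qed
  obtain k where k: "k \<in> {1..m}" "0 \<le> Qz Db m i j - Qz Db m k (cyc_succ m k)"
    using main_abstract[OF sym diag kal assms(6) _ assms(8)] assms(9) by fastforce
  have ck: "cyc_succ m k \<in> {1..m}" "cyc_succ m k \<noteq> k" using k assms by (auto simp: cyc_succ_def)
  have "Qd \<delta> \<mu> \<pi> a m i j = Qz Db m i j" using QQ assms by simp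
  moreover have "Qd \<delta> \<mu> \<pi> a m k (cyc_succ m k) = Qz Db m k (cyc_succ m k)" using QQ k ck by metis
  ultimately show ?thesis using k(1) k(2) by (metis diff_ge_0_iff_ge)
qed

end
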